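(* Let $(K,\mathcal O,k)$ be a $p$-modular system with $\mathcal O$ complete, let $\pi$ generate the maximal ideal of $\mathcal O$, and let $\Lambda$ be an $\mathcal O$-order in a separable $K$-algebra. Then the canonical map $\operatorname{Out}_{\mathcal O}(\Lambda)\to\operatorname{Out}_{\mathcal O}(\Lambda/\pi^s\Lambda)$ is injective for every $s\geq d(\Lambda\otimes_{\mathcal O}\Lambda^{\mathrm{op}})+1$.
   Context: A $p$-modular system $(K,\mathcal O,k)$ consists of a discrete valuation ring $\mathcal O$ of characteristic zero with fraction field $K$ and residue field $k$ of characteristic $p>0$. An $\mathcal O$-order in a separable $K$-algebra is an $\mathcal O$-algebra, free and finitely generated as an $\mathcal O$-module, whose scalar extension to $K$ is separable. $\operatorname{Out}_{\mathcal O}(A)=\operatorname{Aut}_{\mathcal O}(A)/\operatorname{Inn}(A)$. For such an order $\Gamma$, the depth $d(\Gamma)$ is defined by $\pi^{d(\Gamma)}\mathcal O=I(\Gamma)$, where $I(\Gamma)$ is the (nonzero) ideal of elements of $\mathcal O$ annihilating the Hochschild cohomology $H^1(\Gamma,T)$ for all $\Gamma$-$\Gamma$-bimodules $T$. *)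

theory Defs
  imports "HOL-Computational_Algebra.Fraction_Field" "HOL-Computational_Algebra.Primes"
begin

definition dvr_uniformizer :: "'o::idom \<Rightarrow> bool" where
  "dvr_uniformizer pi \<longleftrightarrow> pi \<noteq> 0 \<and> \<not> pi dvd 1 \<and>
     (\<forall>x. x \<noteq> 0 \<longrightarrow> (\<exists>v n. v dvd 1 \<and> x = v * pi ^ n))"

definition pi_complete :: "'o::idom \<Rightarrow> bool" where
  "pi_complete pi \<longleftrightarrow>
     (\<forall>f :: nat \<Rightarrow> 'o. (\<forall>n. pi ^ n dvd (f (Suc n) - f n)) \<longrightarrow>
        (\<exists>x. \<forall>n. pi ^ n dvd (x - f n)))"

definition vec :: "'i set \<Rightarrow> ('i \<Rightarrow> 'a::zero) set" where
  "vec I = {v. \<forall>i. i \<notin> I \<longrightarrow> v i = 0}"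

definition bvec :: "'i \<Rightarrow> 'i \<Rightarrow> 'a::{zero,one}" where
  "bvec i = (\<lambda>j. if j = i then 1 else 0)"

definition vadd :: "('i \<Rightarrow> 'a::plus) \<Rightarrow> ('i \<Rightarrow> 'a) \<Rightarrow> 'i \<Rightarrow> 'a" where
  "vadd x y = (\<lambda>i. x i + y i)"

definition vsmult :: "'a::times \<Rightarrow> ('i \<Rightarrow> 'a) \<Rightarrow> 'i \<Rightarrow> 'a" where
  "vsmult a x = (\<lambda>i. a * x i)"

definition sc_mult :: "'i set \<Rightarrow> ('i \<Rightarrow> 'i \<Rightarrow> 'i \<Rightarrow> 'a::comm_ring_1)
    \<Rightarrow> ('i \<Rightarrow> 'a) \<Rightarrow> ('i \<Rightarrow> 'a) \<Rightarrow> 'i \<Rightarrow> 'a" where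
  "sc_mult I C x y = (\<lambda>k. if k \<in> I then (\<Sum>i\<in>I. \<Sum>j\<in>I. x i * y j * C i j k) else 0)"

definition sc_algebra :: "'i set \<Rightarrow> ('i \<Rightarrow> 'i \<Rightarrow> 'i \<Rightarrow> 'a::comm_ring_1) \<Rightarrow> ('i \<Rightarrow> 'a) \<Rightarrow> bool" where
  "sc_algebra I C u \<longleftrightarrow> finite I \<and> u \<in> vec I \<and>
     (\<forall>x\<in>vec I. \<forall>y\<in>vec I. \<forall>z\<in>vec I.
        sc_mult I C (sc_mult I C x y) z = sc_mult I C x (sc_mult I C y z)) \<and>
     (\<forall>x\<in>vec I. sc_mult I C u x = x \<and> sc_mult I C x u = x)"

text \<open>Separability over a field: existence of a separability idempotent
  e = sum e_ij b_i (x) b_j in A (x) A^op with mu(e) = 1 and a e = e a.\<close>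
definition sc_separable :: "'i set \<Rightarrow> ('i \<Rightarrow> 'i \<Rightarrow> 'i \<Rightarrow> 'k::field) \<Rightarrow> ('i \<Rightarrow> 'k) \<Rightarrow> bool" where
  "sc_separable I C u \<longleftrightarrow> sc_algebra I C u \<and>
     (\<exists>e :: 'i \<Rightarrow> 'i \<Rightarrow> 'k.
        (\<lambda>k. \<Sum>i\<in>I. \<Sum>j\<in>I. e i j * sc_mult I C (bvec i) (bvec j) k) = u \<and>
        (\<forall>a\<in>vec I. \<forall>k\<in>I. \<forall>l\<in>I.
           (\<Sum>i\<in>I. e i l * sc_mult I C a (bvec i) k) =
           (\<Sum>j\<in>I. e k j * sc_mult I C (bvec j) a l)))"

text \<open>Enveloping algebra Lambda (x)_O Lambda^op, basis b_i (x) b_j.\<close>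
definition env_C :: "('i \<Rightarrow> 'i \<Rightarrow> 'i \<Rightarrow> 'a::comm_ring_1)
    \<Rightarrow> ('i \<times> 'i) \<Rightarrow> ('i \<times> 'i) \<Rightarrow> ('i \<times> 'i) \<Rightarrow> 'a" where
  "env_C c = (\<lambda>(i, j) (k, l) (m, r). c i k m * c l j r)"

definition env_u :: "('i \<Rightarrow> 'a::comm_ring_1) \<Rightarrow> ('i \<times> 'i) \<Rightarrow> 'a" where
  "env_u u = (\<lambda>(i, j). u i * u j)"

record ('g, 't) bimod =
  bm_carrier :: "'t set"
  bm_add :: "'t \<Rightarrow> 't \<Rightarrow> 't"
  bm_zero :: 't
  bm_lact :: "'g \<Rightarrow> 't \<Rightarrow> 't"
  bm_ract :: "'t \<Rightarrow> 'g \<Rightarrow> 't"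

text \<open>A Gamma-Gamma-bimodule for the O-algebra Gamma = (J, C, u), with O acting centrally.\<close>
definition is_bimodule :: "'j set \<Rightarrow> ('j \<Rightarrow> 'j \<Rightarrow> 'j \<Rightarrow> 'o::comm_ring_1) \<Rightarrow> ('j \<Rightarrow> 'o)
    \<Rightarrow> ('j \<Rightarrow> 'o, 't) bimod \<Rightarrow> bool" where
  "is_bimodule J C u T \<longleftrightarrow>
     (let M = bm_carrier T; ad = bm_add T; z = bm_zero T; la = bm_lact T; ra = bm_ract T;
          mu = sc_mult J C in
     z \<in> M \<and> (\<forall>s\<in>M. \<forall>t\<in>M. ad s t \<in> M) \<and>
     (\<forall>x\<in>vec J. \<forall>t\<in>M. la x t \<in> M \<and> ra t x \<in> M) \<and>
     (\<forall>r\<in>M. \<forall>s\<in>M. \<forall>t\<in>M. ad (ad r s) t = ad r (ad s t)) \<and>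
     (\<forall>s\<in>M. \<forall>t\<in>M. ad s t = ad t s) \<and>
     (\<forall>t\<in>M. ad z t = t) \<and>
     (\<forall>t\<in>M. \<exists>t'\<in>M. ad t t' = z) \<and>
     (\<forall>x\<in>vec J. \<forall>y\<in>vec J. \<forall>t\<in>M. la (vadd x y) t = ad (la x t) (la y t)) \<and>
     (\<forall>x\<in>vec J. \<forall>s\<in>M. \<forall>t\<in>M. la x (ad s t) = ad (la x s) (la x t)) \<and>
     (\<forall>x\<in>vec J. \<forall>y\<in>vec J. \<forall>t\<in>M. la (mu x y) t = la x (la y t)) \<and>
     (\<forall>t\<in>M. la u t = t) \<and>
     (\<forall>x\<in>vec J. \<forall>y\<in>vec J. \<forall>t\<in>M. ra t (vadd x y) = ad (ra t x) (ra t y)) \<and>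
     (\<forall>x\<in>vec J. \<forall>s\<in>M. \<forall>t\<in>M. ra (ad s t) x = ad (ra s x) (ra t x)) \<and>
     (\<forall>x\<in>vec J. \<forall>y\<in>vec J. \<forall>t\<in>M. ra t (mu x y) = ra (ra t x) y) \<and>
     (\<forall>t\<in>M. ra t u = t) \<and>
     (\<forall>x\<in>vec J. \<forall>y\<in>vec J. \<forall>t\<in>M. la x (ra t y) = ra (la x t) y) \<and>
     (\<forall>a::'o. \<forall>t\<in>M. la (vsmult a u) t = ra t (vsmult a u)))"

definition is_derivation :: "'j set \<Rightarrow> ('j \<Rightarrow> 'j \<Rightarrow> 'j \<Rightarrow> 'o::comm_ring_1) \<Rightarrow> ('j \<Rightarrow> 'o)
    \<Rightarrow> ('j \<Rightarrow> 'o, 't) bimod \<Rightarrow> (('j \<Rightarrow> 'o) \<Rightarrow> 't) \<Rightarrow> bool" where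
  "is_derivation J C u T D \<longleftrightarrow>
     (\<forall>x\<in>vec J. D x \<in> bm_carrier T) \<and>
     (\<forall>x\<in>vec J. \<forall>y\<in>vec J. D (vadd x y) = bm_add T (D x) (D y)) \<and>
     (\<forall>a. \<forall>x\<in>vec J. D (vsmult a x) = bm_lact T (vsmult a u) (D x)) \<and>
     (\<forall>x\<in>vec J. \<forall>y\<in>vec J.
        D (sc_mult J C x y) = bm_add T (bm_lact T x (D y)) (bm_ract T (D x) y))"

definition is_inner_derivation :: "'j set \<Rightarrow> ('j \<Rightarrow> 'o::comm_ring_1, 't) bimod
    \<Rightarrow> (('j \<Rightarrow> 'o) \<Rightarrow> 't) \<Rightarrow> bool" where
  "is_inner_derivation J T D \<longleftrightarrow>
     (\<exists>t\<in>bm_carrier T. \<forall>x\<in>vec J. bm_lact T x t = bm_add T (D x) (bm_ract T t x))"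

text \<open>I(Gamma): elements of O annihilating H^1(Gamma, T) for all bimodules T.
  Bimodules are taken with carrier in the type of elements of Gamma, which is large
  enough.\<close>
definition ann_ideal :: "'j set \<Rightarrow> ('j \<Rightarrow> 'j \<Rightarrow> 'j \<Rightarrow> 'o::comm_ring_1) \<Rightarrow> ('j \<Rightarrow> 'o) \<Rightarrow> 'o set" where
  "ann_ideal J C u = {a. \<forall>T :: ('j \<Rightarrow> 'o, 'j \<Rightarrow> 'o) bimod. is_bimodule J C u T \<longrightarrow>
      (\<forall>D. is_derivation J C u T D \<longrightarrow>
         is_inner_derivation J T (\<lambda>x. bm_lact T (vsmult a u) (D x)))}"

definition is_depth :: "'o::comm_ring_1 \<Rightarrow> 'j set \<Rightarrow> ('j \<Rightarrow> 'j \<Rightarrow> 'j \<Rightarrow> 'o) \<Rightarrow> ('j \<Rightarrow> 'o) \<Rightarrow> nat \<Rightarrow> bool" where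
  "is_depth pi J C u d \<longleftrightarrow> ann_ideal J C u = {pi ^ d * x | x. True}"

definition is_alg_aut :: "'i set \<Rightarrow> ('i \<Rightarrow> 'i \<Rightarrow> 'i \<Rightarrow> 'o::comm_ring_1) \<Rightarrow> ('i \<Rightarrow> 'o)
    \<Rightarrow> (('i \<Rightarrow> 'o) \<Rightarrow> ('i \<Rightarrow> 'o)) \<Rightarrow> bool" where
  "is_alg_aut I C u f \<longleftrightarrow> bij_betw f (vec I) (vec I) \<and>
     (\<forall>x\<in>vec I. \<forall>y\<in>vec I. f (vadd x y) = vadd (f x) (f y)) \<and>
     (\<forall>a. \<forall>x\<in>vec I. f (vsmult a x) = vsmult a (f x)) \<and>
     (\<forall>x\<in>vec I. \<forall>y\<in>vec I. f (sc_mult I C x y) = sc_mult I C (f x) (f y)) \<and>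
     f u = u"

definition cong_pi :: "'o::comm_ring_1 \<Rightarrow> nat \<Rightarrow> ('i \<Rightarrow> 'o) \<Rightarrow> ('i \<Rightarrow> 'o) \<Rightarrow> bool" where
  "cong_pi pi s x y \<longleftrightarrow> (\<forall>i. pi ^ s dvd (x i - y i))"

definition same_outer :: "'i set \<Rightarrow> ('i \<Rightarrow> 'i \<Rightarrow> 'i \<Rightarrow> 'o::comm_ring_1) \<Rightarrow> ('i \<Rightarrow> 'o)
    \<Rightarrow> (('i \<Rightarrow> 'o) \<Rightarrow> ('i \<Rightarrow> 'o)) \<Rightarrow> (('i \<Rightarrow> 'o) \<Rightarrow> ('i \<Rightarrow> 'o)) \<Rightarrow> bool" where
  "same_outer I C u f g \<longleftrightarrow> (\<exists>w\<in>vec I. \<exists>w'\<in>vec I.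
      sc_mult I C w w' = u \<and> sc_mult I C w' w = u \<and>
      (\<forall>x\<in>vec I. f x = sc_mult I C (sc_mult I C w (g x)) w'))"

definition same_outer_mod :: "'o::comm_ring_1 \<Rightarrow> nat \<Rightarrow> 'i set \<Rightarrow> ('i \<Rightarrow> 'i \<Rightarrow> 'i \<Rightarrow> 'o)
    \<Rightarrow> ('i \<Rightarrow> 'o) \<Rightarrow> (('i \<Rightarrow> 'o) \<Rightarrow> ('i \<Rightarrow> 'o)) \<Rightarrow> (('i \<Rightarrow> 'o) \<Rightarrow> ('i \<Rightarrow> 'o)) \<Rightarrow> bool" where
  "same_outer_mod pi s I C u f g \<longleftrightarrow> (\<exists>w\<in>vec I. \<exists>w'\<in>vec I.
      cong_pi pi s (sc_mult I C w w') u \<and> cong_pi pi s (sc_mult I C w' w) u \<and>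
      (\<forall>x\<in>vec I. cong_pi pi s (f x) (sc_mult I C (sc_mult I C w (g x)) w')))"

definition out_reduction_injective :: "'o::comm_ring_1 \<Rightarrow> nat \<Rightarrow> 'i set
    \<Rightarrow> ('i \<Rightarrow> 'i \<Rightarrow> 'i \<Rightarrow> 'o) \<Rightarrow> ('i \<Rightarrow> 'o) \<Rightarrow> bool" where
  "out_reduction_injective pi s I C u \<longleftrightarrow>
     (\<forall>f g. is_alg_aut I C u f \<longrightarrow> is_alg_aut I C u g \<longrightarrow>
        same_outer_mod pi s I C u f g \<longrightarrow> same_outer I C u f g)"

end

theory Submission
  imports Defs
begin

definition vsum :: "'k set \<Rightarrow> ('k \<Rightarrow> 'i \<Rightarrow> 'a::comm_monoid_add) \<Rightarrow> 'i \<Rightarrow> 'a" where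
  "vsum K X = (\<lambda>i. \<Sum>k\<in>K. X k i)"

definition vsub :: "('i \<Rightarrow> 'a::minus) \<Rightarrow> ('i \<Rightarrow> 'a) \<Rightarrow> 'i \<Rightarrow> 'a" where
  "vsub x y = (\<lambda>i. x i - y i)"

lemmas vops = vsum_def vsub_def vadd_def vsmult_def

lemma vec_iff: "x \<in> vec J \<longleftrightarrow> (\<forall>i. i \<notin> J \<longrightarrow> x i = 0)"
  by (simp add: vec_def)

lemma sc_mult_vec[simp]: "sc_mult J C x y \<in> vec J"
  by (simp add: vec_def sc_mult_def)

lemma vadd_vec[simp]: "(x::_\<Rightarrow>'a::comm_ring_1) \<in> vec J \<Longrightarrow> y \<in> vec J \<Longrightarrow> vadd x y \<in> vec J"
  by (simp add: vec_def vadd_def)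
lemma vsub_vec[simp]: "(x::_\<Rightarrow>'a::comm_ring_1) \<in> vec J \<Longrightarrow> y \<in> vec J \<Longrightarrow> vsub x y \<in> vec J"
  by (simp add: vec_def vsub_def)
lemma vsmult_vec[simp]: "(x::_\<Rightarrow>'a::comm_ring_1) \<in> vec J \<Longrightarrow> vsmult a x \<in> vec J"
  by (simp add: vec_def vsmult_def)
lemma vsum_vec[simp]: "(\<And>k. k \<in> K \<Longrightarrow> X k \<in> vec J) \<Longrightarrow> vsum K X \<in> vec J"
  by (simp add: vec_def vsum_def)
lemma bvec_vec[simp]: "i \<in> J \<Longrightarrow> bvec i \<in> vec J"
  by (simp add: vec_def bvec_def)
lemma zero_vec[simp]: "(\<lambda>_. 0) \<in> vec J"
  by (simp add: vec_def)

lemma sc_mult_vadd_left: "sc_mult J C (vadd x y) z = vadd (sc_mult J C x z) (sc_mult J C y z)"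
  by (auto simp: sc_mult_def vadd_def fun_eq_iff sum.distrib algebra_simps)
lemma sc_mult_vadd_right: "sc_mult J C z (vadd x y) = vadd (sc_mult J C z x) (sc_mult J C z y)"
  by (auto simp: sc_mult_def vadd_def fun_eq_iff sum.distrib algebra_simps)
lemma sc_mult_vsub_left: "sc_mult J C (vsub x y) z = vsub (sc_mult J C x z) (sc_mult J C y z)"
  by (auto simp: sc_mult_def vsub_def fun_eq_iff sum_subtractf algebra_simps)
lemma sc_mult_vsub_right: "sc_mult J C z (vsub x y) = vsub (sc_mult J C z x) (sc_mult J C z y)"
  by (auto simp: sc_mult_def vsub_def fun_eq_iff sum_subtractf algebra_simps)
lemma sc_mult_vsmult_left: "sc_mult J C (vsmult a x) z = vsmult a (sc_mult J C x z)"
  by (auto simp: sc_mult_def vsmult_def fun_eq_iff sum_distrib_left algebra_simps)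
lemma sc_mult_vsmult_right: "sc_mult J C z (vsmult a x) = vsmult a (sc_mult J C z x)"
  by (auto simp: sc_mult_def vsmult_def fun_eq_iff sum_distrib_left algebra_simps)
lemma sc_mult_vsum_left: "sc_mult J C (vsum K X) z = vsum K (\<lambda>k. sc_mult J C (X k) z)"
proof -
  have "(\<Sum>i\<in>J. \<Sum>j\<in>J. (\<Sum>k\<in>K. X k i) * z j * C i j m) = (\<Sum>k\<in>K. \<Sum>i\<in>J. \<Sum>j\<in>J. X k i * z j * C i j m)" for m
    by (simp add: sum_distrib_right sum.swap[of _ K])
  then show ?thesis by (auto simp: sc_mult_def vsum_def fun_eq_iff)
qed
lemma sc_mult_vsum_right: "sc_mult J C z (vsum K X) = vsum K (\<lambda>k. sc_mult J C z (X k))"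
proof -
  have "(\<Sum>i\<in>J. \<Sum>j\<in>J. z i * (\<Sum>k\<in>K. X k j) * C i j m) = (\<Sum>k\<in>K. \<Sum>i\<in>J. \<Sum>j\<in>J. z i * X k j * C i j m)" for m
    by (simp add: sum_distrib_right sum_distrib_left sum.swap[of _ K] mult.assoc)
  then show ?thesis by (auto simp: sc_mult_def vsum_def fun_eq_iff)
qed
lemma sc_mult_zero_left[simp]: "sc_mult J C (\<lambda>_. 0) z = (\<lambda>_. 0)"
  by (auto simp: sc_mult_def fun_eq_iff)
lemma sc_mult_zero_right[simp]: "sc_mult J C z (\<lambda>_. 0) = (\<lambda>_. 0)"
  by (auto simp: sc_mult_def fun_eq_iff)

lemma sum_bvec_left: "finite J \<Longrightarrow> (\<Sum>i\<in>J. bvec p i * (F i::'a::comm_ring_1)) = (if p \<in> J then F p else 0)"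
  by (simp add: bvec_def if_distrib if_distribR sum.delta cong: if_cong)

lemma sc_mult_bvec: "finite J \<Longrightarrow> p \<in> J \<Longrightarrow> q \<in> J \<Longrightarrow> m \<in> J \<Longrightarrow> sc_mult J C (bvec p) (bvec q) m = C p q m"
  by (simp add: sc_mult_def mult.assoc sum_distrib_left[symmetric] sum_bvec_left)

lemma vec_decomp: "finite J \<Longrightarrow> (x::_\<Rightarrow>'a::comm_ring_1) \<in> vec J \<Longrightarrow> x = vsum J (\<lambda>i. vsmult (x i) (bvec i))"
proof (rule ext)
  fix k assume "finite J" "x \<in> vec J"
  have "(\<Sum>i\<in>J. x i * bvec i k) = (\<Sum>i\<in>J. (if i = k then x k else 0))"
    by (rule sum.cong) (auto simp: bvec_def)
  also have "\<dots> = x k" using \<open>finite J\<close> \<open>x \<in> vec J\<close> by (simp add: sum.delta' vec_def)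
  finally show "x k = vsum J (\<lambda>i. vsmult (x i) (bvec i)) k" by (simp add: vsum_def vsmult_def)
qed

lemma vsmult_vsum: "vsmult (a::'a::comm_ring_1) (vsum K X) = vsum K (\<lambda>k. vsmult a (X k))"
  by (simp add: vops sum_distrib_left)
lemma vsmult_vsmult[simp]: "vsmult (a::'a::comm_ring_1) (vsmult b x) = vsmult (a*b) x"
  by (simp add: vops mult.assoc)
lemma vsum_vsmult_sum: "vsmult (\<Sum>k\<in>K. (a k::'a::comm_ring_1)) x = vsum K (\<lambda>k. vsmult (a k) x)"
  by (simp add: vops sum_distrib_right)
lemma vsum_swap: "vsum A (\<lambda>a. vsum B (\<lambda>b. X a b)) = vsum B (\<lambda>b. vsum A (\<lambda>a. X a b))"
  by (simp add: vops sum.swap[of _ A])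
lemma vsum_cong: "(\<And>k. k \<in> K \<Longrightarrow> X k = Y k) \<Longrightarrow> vsum K X = vsum K Y"
  by (simp add: vsum_def)
lemma vsum_vadd: "vsum K (\<lambda>k. vadd (X k::_\<Rightarrow>'a::comm_ring_1) (Y k)) = vadd (vsum K X) (vsum K Y)"
  by (simp add: vops sum.distrib)
lemma vsum_cart: "vsum (A \<times> B) X = vsum A (\<lambda>a. vsum B (\<lambda>b. X (a, b)))"
  by (simp add: vsum_def sum.cartesian_product)
lemma vsmult_one[simp]: "vsmult 1 (x::_\<Rightarrow>'a::comm_ring_1) = x"
  by (simp add: vsmult_def)
lemma vsmult_vadd: "vsmult (a::'a::comm_ring_1) (vadd x y) = vadd (vsmult a x) (vsmult a y)"
  by (simp add: vops algebra_simps)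

definition linV :: "'i set \<Rightarrow> (('i \<Rightarrow> 'a::comm_ring_1) \<Rightarrow> ('i \<Rightarrow> 'a)) \<Rightarrow> bool" where
  "linV I H \<longleftrightarrow> (\<forall>x\<in>vec I. H x \<in> vec I) \<and>
     (\<forall>x\<in>vec I. \<forall>y\<in>vec I. H (vadd x y) = vadd (H x) (H y)) \<and>
     (\<forall>a. \<forall>x\<in>vec I. H (vsmult a x) = vsmult a (H x))"

lemma linV_vec: "linV I H \<Longrightarrow> x \<in> vec I \<Longrightarrow> H x \<in> vec I"
  by (simp add: linV_def)
lemma linV_add: "linV I H \<Longrightarrow> x \<in> vec I \<Longrightarrow> y \<in> vec I \<Longrightarrow> H (vadd x y) = vadd (H x) (H y)"
  by (simp add: linV_def)
lemma linV_smult: "linV I H \<Longrightarrow> x \<in> vec I \<Longrightarrow> H (vsmult a x) = vsmult a (H x)"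
  by (simp add: linV_def)

lemma linV_sum:
  assumes "linV I H" "\<And>k. k \<in> K \<Longrightarrow> X k \<in> vec I" "finite K"
  shows "H (vsum K (\<lambda>k. vsmult (a k) (X k))) = vsum K (\<lambda>k. vsmult (a k) (H (X k)))"
  using assms(3,2)
proof (induction K rule: finite_induct)
  case empty
  have "H (vsmult 0 (\<lambda>_. 0)) = vsmult 0 (H (\<lambda>_. 0))"
    using assms(1) by (simp add: linV_smult)
  then show ?case by (simp add: vsum_def vsmult_def)
next
  case (insert k K)
  have e: "vsum (insert k K) Y = vadd (Y k) (vsum K Y)" for Y
    using insert by (simp add: vsum_def vadd_def)
  show ?case
    using insert assms(1) by (simp add: e linV_add linV_smult)
qed

lemma linV_zero: "linV I H \<Longrightarrow> H (\<lambda>_. 0) = (\<lambda>_. 0)"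
  using linV_smult[of I H "\<lambda>_. 0" 0] by (simp add: vsmult_def)

lemma linV_sub: assumes "linV I H" "x \<in> vec I" "y \<in> vec I"
  shows "H (vsub x y) = vsub (H x) (H y)"
proof -
  have "vsub x y = vadd x (vsmult (-1) y)" by (simp add: vops)
  then have "H (vsub x y) = vadd (H x) (vsmult (-1) (H y))" using assms by (simp add: linV_add linV_smult)
  then show ?thesis by (simp add: vops)
qed

lemma linV_M_left: "linV I (\<lambda>x. sc_mult I C x b)"
  by (simp add: linV_def sc_mult_vadd_left sc_mult_vsmult_left)
lemma linV_M_right: "linV I (\<lambda>x. sc_mult I C b x)"
  by (simp add: linV_def sc_mult_vadd_right sc_mult_vsmult_right)
lemma linV_comp: "linV I F \<Longrightarrow> linV I G \<Longrightarrow> linV I (\<lambda>x. F (G x))"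
  by (simp add: linV_def)
lemma linV_id: "linV I (\<lambda>x. x)"
  by (simp add: linV_def)
lemma linV_vadd: assumes "linV I F" "linV I G" shows "linV I (\<lambda>x. vadd (F x) (G x))"
  unfolding linV_def using assms by (auto simp: linV_vec linV_add linV_smult) (auto simp: vops algebra_simps)
lemma linV_vsmult: assumes "linV I F" shows "linV I (\<lambda>x. vsmult a (F x))"
  unfolding linV_def using assms by (auto simp: linV_vec linV_add linV_smult) (auto simp: vops algebra_simps)
lemma linV_vsum: assumes "\<And>k. k \<in> K \<Longrightarrow> linV I (F k)" shows "linV I (\<lambda>x. vsum K (\<lambda>k. F k x))"
proof -
  have 1: "vsum K (\<lambda>k. F k (vadd x y)) = vadd (vsum K (\<lambda>k. F k x)) (vsum K (\<lambda>k. F k y))"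
    if "x \<in> vec I" "y \<in> vec I" for x y
  proof -
    have "vsum K (\<lambda>k. F k (vadd x y)) = vsum K (\<lambda>k. vadd (F k x) (F k y))"
      by (rule vsum_cong, rule linV_add[OF assms], auto simp: that)
    then show ?thesis by (simp add: vsum_vadd)
  qed
  have 2: "vsum K (\<lambda>k. F k (vsmult a x)) = vsmult a (vsum K (\<lambda>k. F k x))"
    if "x \<in> vec I" for x a
  proof -
    have "vsum K (\<lambda>k. F k (vsmult a x)) = vsum K (\<lambda>k. vsmult a (F k x))"
      by (rule vsum_cong, rule linV_smult[OF assms], auto simp: that)
    then show ?thesis by (simp add: vsmult_vsum)
  qed
  show ?thesis unfolding linV_def using assms 1 2 by (auto simp: linV_vec)
qed

definition lc :: "'j set \<Rightarrow> ('j \<Rightarrow> 'a::comm_ring_1) \<Rightarrow> ('j \<Rightarrow> 'i \<Rightarrow> 'a) \<Rightarrow> 'i \<Rightarrow> 'a" where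
  "lc J g Q = vsum J (\<lambda>p. vsmult (g p) (Q p))"

definition tensor :: "('i \<Rightarrow> 'a::comm_ring_1) \<Rightarrow> ('i \<Rightarrow> 'a) \<Rightarrow> 'i \<times> 'i \<Rightarrow> 'a" where
  "tensor x y = (\<lambda>p. x (fst p) * y (snd p))"

lemma tensor_vec[simp]: "x \<in> vec I \<Longrightarrow> y \<in> vec I \<Longrightarrow> tensor x y \<in> vec (I \<times> I)"
  by (auto simp: vec_def tensor_def)

lemma lc_lin: "lc J (vsum K (\<lambda>k. vsmult (a k) (G k))) Q = vsum K (\<lambda>k. vsmult (a k) (lc J (G k) Q))"
  by (simp add: lc_def vops sum_distrib_left sum_distrib_right sum.swap[of _ K] mult.assoc)

lemma lc_vadd: "lc J (vadd x y) Q = vadd (lc J x Q) (lc J y Q)"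
  by (simp add: lc_def vops sum.distrib algebra_simps)
lemma lc_vsmult: "lc J (vsmult a x) Q = vsmult a (lc J x Q)"
  by (simp add: lc_def vops sum_distrib_left algebra_simps)

lemma lc_tensor: "lc (I \<times> I) (tensor a b) Q = vsum I (\<lambda>i. vsum I (\<lambda>j. vsmult (a i * b j) (Q (i, j))))"
  by (simp add: lc_def tensor_def vsum_cart)

lemma lc_vec: "(\<And>p. p \<in> J \<Longrightarrow> Q p \<in> vec I) \<Longrightarrow> lc J g Q \<in> vec I"
  by (simp add: lc_def vec_def vops)

lemma bilin_decomp:
  fixes a b :: "'i \<Rightarrow> 'a::comm_ring_1"
  assumes fin: "finite I" and a: "a \<in> vec I" and b: "b \<in> vec I"
    and l1: "linV I (\<lambda>x. \<Phi> x b)" and l2: "\<And>i. i \<in> I \<Longrightarrow> linV I (\<Phi> (bvec i))"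
  shows "vsum I (\<lambda>i. vsum I (\<lambda>j. vsmult (a i * b j) (\<Phi> (bvec i) (bvec j)))) = \<Phi> a b"
proof -
  have "vsum I (\<lambda>j. vsmult (a i * b j) (\<Phi> (bvec i) (bvec j))) = vsmult (a i) (\<Phi> (bvec i) b)"
    if i: "i \<in> I" for i
  proof -
    have "vsum I (\<lambda>j. vsmult (a i * b j) (\<Phi> (bvec i) (bvec j))) =
          vsmult (a i) (vsum I (\<lambda>j. vsmult (b j) (\<Phi> (bvec i) (bvec j))))"
      by (simp add: vsmult_vsum)
    also have "vsum I (\<lambda>j. vsmult (b j) (\<Phi> (bvec i) (bvec j))) = \<Phi> (bvec i) (vsum I (\<lambda>j. vsmult (b j) (bvec j)))"
      using linV_sum[OF l2[OF i], of I bvec b] fin by simp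
    also have "vsum I (\<lambda>j. vsmult (b j) (bvec j)) = b" using vec_decomp[OF fin b] by simp
    finally show ?thesis .
  qed
  then have "vsum I (\<lambda>i. vsum I (\<lambda>j. vsmult (a i * b j) (\<Phi> (bvec i) (bvec j)))) =
     vsum I (\<lambda>i. vsmult (a i) (\<Phi> (bvec i) b))" by (rule vsum_cong)
  also have "\<dots> = \<Phi> (vsum I (\<lambda>i. vsmult (a i) (bvec i))) b"
    using linV_sum[OF l1, of I bvec a] fin by simp
  also have "vsum I (\<lambda>i. vsmult (a i) (bvec i)) = a" using vec_decomp[OF fin a] by simp
  finally show ?thesis .
qed

definition act :: "'i set \<Rightarrow> ('i \<Rightarrow> 'i \<Rightarrow> 'i \<Rightarrow> 'a::comm_ring_1) \<Rightarrow> (('i \<Rightarrow> 'a) \<Rightarrow> ('i \<Rightarrow> 'a))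
   \<Rightarrow> (('i \<Rightarrow> 'a) \<Rightarrow> ('i \<Rightarrow> 'a)) \<Rightarrow> ('i \<times> 'i \<Rightarrow> 'a) \<Rightarrow> ('i \<Rightarrow> 'a) \<Rightarrow> 'i \<Rightarrow> 'a" where
  "act I c F G g m = lc (I \<times> I) g (\<lambda>p. sc_mult I c (sc_mult I c (F (bvec (fst p))) m) (G (bvec (snd p))))"

locale scalg =
  fixes I :: "'i set" and c :: "'i \<Rightarrow> 'i \<Rightarrow> 'i \<Rightarrow> 'o::comm_ring_1" and u :: "'i \<Rightarrow> 'o"
  assumes alg: "sc_algebra I c u"
begin

abbreviation M where "M \<equiv> sc_mult I c"

lemma fin[simp]: "finite I" using alg by (simp add: sc_algebra_def)
lemma u_vec[simp]: "u \<in> vec I" using alg by (simp add: sc_algebra_def)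
lemma assoc[simp]: "x \<in> vec I \<Longrightarrow> y \<in> vec I \<Longrightarrow> z \<in> vec I \<Longrightarrow> M (M x y) z = M x (M y z)"
  using alg by (simp add: sc_algebra_def)
lemma unit_l[simp]: "x \<in> vec I \<Longrightarrow> M u x = x"
  using alg by (simp add: sc_algebra_def)
lemma unit_r[simp]: "x \<in> vec I \<Longrightarrow> M x u = x"
  using alg by (simp add: sc_algebra_def)

definition hom :: "(('i \<Rightarrow> 'o) \<Rightarrow> ('i \<Rightarrow> 'o)) \<Rightarrow> bool" where
  "hom F \<longleftrightarrow> linV I F \<and> (\<forall>x\<in>vec I. \<forall>y\<in>vec I. F (M x y) = M (F x) (F y)) \<and> F u = u"

lemma hom_id: "hom (\<lambda>x. x)" by (simp add: hom_def linV_id)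
lemma hom_lin: "hom F \<Longrightarrow> linV I F" by (simp add: hom_def)
lemma hom_vec[simp]: "hom F \<Longrightarrow> x \<in> vec I \<Longrightarrow> F x \<in> vec I" by (simp add: hom_def linV_vec)
lemma hom_mult: "hom F \<Longrightarrow> x \<in> vec I \<Longrightarrow> y \<in> vec I \<Longrightarrow> F (M x y) = M (F x) (F y)" by (simp add: hom_def)
lemma hom_u[simp]: "hom F \<Longrightarrow> F u = u" by (simp add: hom_def)

lemma aut_hom: assumes "is_alg_aut I c u f" shows "hom f"
proof -
  have b: "bij_betw f (vec I) (vec I)" using assms by (simp add: is_alg_aut_def)
  have "\<forall>x\<in>vec I. f x \<in> vec I" using bij_betwE[OF b] by blast
  then show ?thesis using assms unfolding is_alg_aut_def hom_def linV_def by blast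
qed

abbreviation mu where "mu \<equiv> sc_mult (I \<times> I) (env_C c)"

lemma tensor_env: "p \<in> I \<times> I \<Longrightarrow> q \<in> I \<times> I \<Longrightarrow> r \<in> I \<times> I \<Longrightarrow>
   tensor (M (bvec (fst p)) (bvec (fst q))) (M (bvec (snd q)) (bvec (snd p))) r = env_C c p q r"
  by (auto simp: tensor_def env_C_def sc_mult_bvec split_beta)

lemma lc_mult:
  "lc (I \<times> I) (mu x y) Q = vsum (I \<times> I) (\<lambda>p. vsum (I \<times> I) (\<lambda>q. vsmult (x p * y q)
     (lc (I \<times> I) (tensor (M (bvec (fst p)) (bvec (fst q))) (M (bvec (snd q)) (bvec (snd p)))) Q)))"
proof (rule ext)
  fix i
  have "lc (I \<times> I) (mu x y) Q i = (\<Sum>r\<in>I \<times> I. (\<Sum>p\<in>I \<times> I. \<Sum>q\<in>I \<times> I. x p * y q * env_C c p q r) * Q r i)"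
    unfolding lc_def vsum_def vsmult_def sc_mult_def by (rule sum.cong[OF refl]) simp
  also have "\<dots> = (\<Sum>r\<in>I \<times> I. \<Sum>p\<in>I \<times> I. \<Sum>q\<in>I \<times> I. x p * y q * env_C c p q r * Q r i)"
    by (simp only: sum_distrib_right)
  also have "\<dots> = (\<Sum>p\<in>I \<times> I. \<Sum>r\<in>I \<times> I. \<Sum>q\<in>I \<times> I. x p * y q * env_C c p q r * Q r i)"
    by (rule sum.swap)
  also have "\<dots> = (\<Sum>p\<in>I \<times> I. \<Sum>q\<in>I \<times> I. \<Sum>r\<in>I \<times> I. x p * y q * env_C c p q r * Q r i)"
    by (rule sum.cong[OF refl], rule sum.swap)
  also have "\<dots> = (\<Sum>p\<in>I \<times> I. \<Sum>q\<in>I \<times> I. \<Sum>r\<in>I \<times> I. x p * y q *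
       (tensor (M (bvec (fst p)) (bvec (fst q))) (M (bvec (snd q)) (bvec (snd p))) r * Q r i))"
    by (rule sum.cong[OF refl], rule sum.cong[OF refl], rule sum.cong[OF refl]) (simp add: tensor_env mult.assoc)
  also have "\<dots> = vsum (I \<times> I) (\<lambda>p. vsum (I \<times> I) (\<lambda>q. vsmult (x p * y q)
     (lc (I \<times> I) (tensor (M (bvec (fst p)) (bvec (fst q))) (M (bvec (snd q)) (bvec (snd p)))) Q))) i"
    unfolding lc_def vsum_def vsmult_def by (simp only: sum_distrib_left)
  finally show "lc (I \<times> I) (mu x y) Q i = \<dots>" .
qed

lemma act_tensor:
  assumes F: "linV I F" and G: "linV I G" and a: "a \<in> vec I" and b: "b \<in> vec I"
  shows "act I c F G (tensor a b) m = M (M (F a) m) (G b)"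
proof -
  have "act I c F G (tensor a b) m = vsum I (\<lambda>i. vsum I (\<lambda>j. vsmult (a i * b j) (M (M (F (bvec i)) m) (G (bvec j)))))"
    by (simp add: act_def lc_tensor)
  also have "\<dots> = M (M (F a) m) (G b)"
    apply (rule bilin_decomp[where \<Phi>="\<lambda>x y. M (M (F x) m) (G y)", OF fin a b])
     apply (rule linV_comp[OF linV_M_left linV_comp[OF linV_M_left F]])
    apply (rule linV_comp[OF linV_M_right G])
    done
  finally show ?thesis .
qed

lemma act_vec[simp]: "act I c F G g m \<in> vec I"
  by (simp add: act_def lc_vec)

lemma linV_act: "linV I (act I c F G g)"
  unfolding act_def lc_def
  by (intro linV_vsum linV_vsmult linV_comp[OF linV_M_left] linV_M_left linV_M_right)

lemma env_u_tensor: "env_u u = tensor u u"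
  unfolding env_u_def tensor_def by (rule ext) (simp add: split_beta)

lemma act_unit: "hom F \<Longrightarrow> hom G \<Longrightarrow> m \<in> vec I \<Longrightarrow> act I c F G (env_u u) m = m"
  by (simp add: env_u_tensor act_tensor hom_lin)

lemma act_smult_unit: "hom F \<Longrightarrow> hom G \<Longrightarrow> m \<in> vec I \<Longrightarrow> act I c F G (vsmult a (env_u u)) m = vsmult a m"
  by (simp add: act_def lc_vsmult act_unit[unfolded act_def])

lemma act_vadd: "act I c F G (vadd x y) m = vadd (act I c F G x m) (act I c F G y m)"
  by (simp add: act_def lc_vadd)

lemma act_vsmult: "act I c F G (vsmult a x) m = vsmult a (act I c F G x m)"
  by (simp add: act_def lc_vsmult)

lemma act_mult:
  assumes F: "hom F" and G: "hom G" and m: "m \<in> vec I"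
  shows "act I c F G (mu x y) m = act I c F G x (act I c F G y m)"
proof -
  let ?b = "bvec :: 'i \<Rightarrow> 'i \<Rightarrow> 'o"
  have "act I c F G (mu x y) m = vsum (I \<times> I) (\<lambda>p. vsum (I \<times> I) (\<lambda>q. vsmult (x p * y q)
     (act I c F G (tensor (M (?b (fst p)) (?b (fst q))) (M (?b (snd q)) (?b (snd p)))) m)))"
    unfolding act_def[of I c F G "mu x y"] lc_mult act_def ..
  also have "\<dots> = vsum (I \<times> I) (\<lambda>p. vsum (I \<times> I) (\<lambda>q. vsmult (x p * y q)
     (M (M (F (M (?b (fst p)) (?b (fst q)))) m) (G (M (?b (snd q)) (?b (snd p)))))))"
    apply (rule vsum_cong, rule vsum_cong)
    apply (subst act_tensor[OF hom_lin[OF F] hom_lin[OF G]])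
      apply auto
    done
  also have "\<dots> = vsum (I \<times> I) (\<lambda>p. vsum (I \<times> I) (\<lambda>q. vsmult (x p * y q)
     (M (M (F (?b (fst p))) (M (M (F (?b (fst q))) m) (G (?b (snd q))))) (G (?b (snd p))))))"
    apply (rule vsum_cong, rule vsum_cong)
    apply (auto simp: hom_mult[OF F] hom_mult[OF G] m hom_vec[OF F] hom_vec[OF G])
    done
  also have "\<dots> = act I c F G x (act I c F G y m)"
    by (simp add: act_def lc_def sc_mult_vsum_left sc_mult_vsum_right sc_mult_vsmult_left
        sc_mult_vsmult_right vsmult_vsum)
  finally show ?thesis .
qed

end

definition app :: "'i set \<Rightarrow> ('i \<times> 'i \<Rightarrow> 'a::comm_ring_1) \<Rightarrow> ('i \<Rightarrow> 'a) \<Rightarrow> 'i \<Rightarrow> 'a" where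
  "app I P x = (\<lambda>q. if q \<in> I then (\<Sum>p\<in>I. x p * P (p, q)) else 0)"

definition mat :: "'i set \<Rightarrow> (('i \<Rightarrow> 'a::comm_ring_1) \<Rightarrow> ('i \<Rightarrow> 'a)) \<Rightarrow> 'i \<times> 'i \<Rightarrow> 'a" where
  "mat I H = (\<lambda>r. if fst r \<in> I \<and> snd r \<in> I then H (bvec (fst r)) (snd r) else 0)"

lemma app_vec[simp]: "app I P x \<in> vec I"
  by (simp add: app_def vec_def)
lemma mat_vec[simp]: "mat I H \<in> vec (I \<times> I)"
  by (auto simp: mat_def vec_def)

lemma app_vadd_arg: "app I P (vadd x y) = vadd (app I P x) (app I P y)"
  by (auto simp: app_def vops fun_eq_iff sum.distrib distrib_right)
lemma app_vsmult_arg: "app I P (vsmult a x) = vsmult a (app I P x)"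
  by (auto simp: app_def vops fun_eq_iff sum_distrib_left mult.assoc)
lemma app_vadd_mat: "app I (vadd P Q) x = vadd (app I P x) (app I Q x)"
  by (auto simp: app_def vops fun_eq_iff sum.distrib distrib_left)
lemma linV_app: "linV I (app I P)"
  by (simp add: linV_def app_vadd_arg app_vsmult_arg)

lemma app_mat:
  assumes fin: "finite I" and H: "linV I H" and x: "x \<in> vec I"
  shows "app I (mat I H) x = H x"
proof (rule ext)
  fix q
  show "app I (mat I H) x q = H x q"
  proof (cases "q \<in> I")
    case True
    have "app I (mat I H) x q = (\<Sum>p\<in>I. x p * H (bvec p) q)"
      using True by (simp add: app_def mat_def)
    also have "\<dots> = vsum I (\<lambda>p. vsmult (x p) (H (bvec p))) q"
      by (simp add: vops)
    also have "vsum I (\<lambda>p. vsmult (x p) (H (bvec p))) = H (vsum I (\<lambda>p. vsmult (x p) (bvec p)))"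
      using linV_sum[OF H, of I bvec x] fin by simp
    also have "vsum I (\<lambda>p. vsmult (x p) (bvec p)) = x" using vec_decomp[OF fin x] by simp
    finally show ?thesis .
  next
    case False
    have "H x \<in> vec I" using H x by (simp add: linV_vec)
    then show ?thesis using False by (simp add: app_def vec_def)
  qed
qed

lemma mat_app:
  fixes P :: "'i \<times> 'i \<Rightarrow> 'o::comm_ring_1"
  assumes fin: "finite I" and P: "P \<in> vec (I \<times> I)"
  shows "mat I (app I P) = P"
proof (rule ext)
  fix r :: "'i \<times> 'i"
  obtain p q where r: "r = (p, q)" by (cases r)
  show "mat I (app I P) r = P r"
  proof (cases "p \<in> I \<and> q \<in> I")
    case True
    then show ?thesis using fin by (simp add: r mat_def app_def sum_bvec_left)
  next
    case False
    then show ?thesis using P by (auto simp: r mat_def vec_def)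
  qed
qed

lemma mat_vadd: "mat I (\<lambda>x. vadd (H1 x) (H2 x)) = vadd (mat I H1) (mat I H2)"
  by (auto simp: mat_def vops fun_eq_iff)
lemma mat_vsmult: "mat I (\<lambda>x. vsmult a (H x)) = vsmult a (mat I H)"
  by (auto simp: mat_def vops fun_eq_iff)
lemma mat_cong: "(\<And>x. x \<in> vec I \<Longrightarrow> H1 x = H2 x) \<Longrightarrow> mat I H1 = mat I H2"
  by (auto simp: mat_def fun_eq_iff)
lemma mat_inj: "finite I \<Longrightarrow> linV I H1 \<Longrightarrow> linV I H2 \<Longrightarrow> mat I H1 = mat I H2 \<Longrightarrow> x \<in> vec I \<Longrightarrow> H1 x = H2 x"
  by (metis app_mat)

context scalg
begin

definition Tm :: "(('i \<Rightarrow> 'o) \<Rightarrow> ('i \<Rightarrow> 'o)) \<Rightarrow> (('i \<Rightarrow> 'o) \<Rightarrow> ('i \<Rightarrow> 'o))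
    \<Rightarrow> ('i \<times> 'i \<Rightarrow> 'o, 'i \<times> 'i \<Rightarrow> 'o) bimod" where
  "Tm f g = \<lparr>bm_carrier = vec (I \<times> I), bm_add = vadd, bm_zero = (\<lambda>_. 0),
     bm_lact = (\<lambda>y P. mat I (\<lambda>x. act I c f g y (app I P x))),
     bm_ract = (\<lambda>P y. mat I (\<lambda>x. app I P (act I c (\<lambda>z. z) (\<lambda>z. z) y x)))\<rparr>"

lemma app_vec_I[simp]: "app I P x \<in> vec I" by simp

lemma Tm_bimodule:
  assumes f: "hom f" and g: "hom g"
  shows "is_bimodule (I \<times> I) (env_C c) (env_u u) (Tm f g)"
proof -
  let ?la = "\<lambda>y P. mat I (\<lambda>x. act I c f g y (app I P x))"
  let ?ra = "\<lambda>P y. mat I (\<lambda>x. app I P (act I c (\<lambda>z. z) (\<lambda>z. z) y x))"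
  let ?act0 = "act I c (\<lambda>z. z) (\<lambda>z. z)"
  note hid = hom_id
  have la_add: "?la (vadd x y) t = vadd (?la x t) (?la y t)" for x y t
    by (simp add: act_vadd mat_vadd)
  have la_add2: "?la x (vadd s t) = vadd (?la x s) (?la x t)" for x s t
  proof -
    have "?la x (vadd s t) = mat I (\<lambda>z. vadd (act I c f g x (app I s z)) (act I c f g x (app I t z)))"
      by (rule mat_cong) (simp add: app_vadd_mat linV_add[OF linV_act])
    then show ?thesis by (simp add: mat_vadd)
  qed
  have la_mult: "?la (mu x y) t = ?la x (?la y t)" for x y t
    by (rule mat_cong) (simp add: act_mult f g app_mat linV_comp[OF linV_act linV_app])
  have la_u: "?la (env_u u) t = t" if "t \<in> vec (I \<times> I)" for t
  proof -
    have "?la (env_u u) t = mat I (app I t)" by (rule mat_cong) (simp add: act_unit f g)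
    then show ?thesis using mat_app[OF fin that] by simp
  qed
  have ra_add: "?ra t (vadd x y) = vadd (?ra t x) (?ra t y)" for x y t
    by (simp add: act_vadd app_vadd_arg mat_vadd)
  have ra_add2: "?ra (vadd s t) x = vadd (?ra s x) (?ra t x)" for x s t
    by (simp add: app_vadd_mat mat_vadd)
  have ra_mult: "?ra t (mu x y) = ?ra (?ra t x) y" for x y t
    by (rule mat_cong) (simp add: act_mult hid app_mat linV_comp[OF linV_app linV_act])
  have ra_u: "?ra t (env_u u) = t" if "t \<in> vec (I \<times> I)" for t
  proof -
    have "?ra t (env_u u) = mat I (app I t)" by (rule mat_cong) (simp add: act_unit hid)
    then show ?thesis using mat_app[OF fin that] by simp
  qed
  have lara: "?la x (?ra t y) = ?ra (?la x t) y" for x y t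
  proof -
    have "?la x (?ra t y) = mat I (\<lambda>z. act I c f g x (app I t (?act0 y z)))"
      by (rule mat_cong) (simp add: app_mat linV_comp[OF linV_app linV_act])
    also have "\<dots> = ?ra (?la x t) y"
      by (rule mat_cong) (simp add: app_mat linV_comp[OF linV_act linV_app])
    finally show ?thesis .
  qed
  have central: "?la (vsmult a (env_u u)) t = ?ra t (vsmult a (env_u u))" for a t
  proof -
    have "?la (vsmult a (env_u u)) t = mat I (\<lambda>z. vsmult a (app I t z))"
      by (rule mat_cong) (simp add: act_smult_unit f g)
    also have "\<dots> = ?ra t (vsmult a (env_u u))"
      by (rule mat_cong) (simp add: act_smult_unit hid app_vsmult_arg)
    finally show ?thesis .
  qed
  have inv: "\<exists>t'\<in>vec (I \<times> I). vadd t t' = (\<lambda>_. 0)" if "t \<in> vec (I \<times> I)" for t :: "'i \<times> 'i \<Rightarrow> 'o"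
  proof
    show "(\<lambda>i. - t i) \<in> vec (I \<times> I)" using that by (simp add: vec_def)
    show "vadd t (\<lambda>i. - t i) = (\<lambda>_. 0)" by (simp add: vadd_def)
  qed
  show ?thesis
    unfolding is_bimodule_def Let_def Tm_def bimod.simps
    by (simp add: la_add la_add2 la_mult la_u ra_add ra_add2 ra_mult ra_u lara central inv)
       (simp add: vops algebra_simps)
qed

end

locale twist = scalg I c u for I :: "'i set" and c :: "'i \<Rightarrow> 'i \<Rightarrow> 'i \<Rightarrow> 'o::comm_ring_1" and u +
  fixes f g \<delta> :: "('i \<Rightarrow> 'o) \<Rightarrow> ('i \<Rightarrow> 'o)"
  assumes f: "hom f" and g: "hom g" and dl: "linV I \<delta>"
    and dder: "\<And>a b. a \<in> vec I \<Longrightarrow> b \<in> vec I \<Longrightarrow> \<delta> (M a b) = vadd (M (f a) (\<delta> b)) (M (\<delta> a) (g b))"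
begin

lemma dvec[simp]: "a \<in> vec I \<Longrightarrow> \<delta> a \<in> vec I" using dl by (simp add: linV_vec)
lemma fvec[simp]: "a \<in> vec I \<Longrightarrow> f a \<in> vec I" using f by simp
lemma gvec[simp]: "a \<in> vec I \<Longrightarrow> g a \<in> vec I" using g by simp

definition Dx :: "('i \<times> 'i \<Rightarrow> 'o) \<Rightarrow> ('i \<Rightarrow> 'o) \<Rightarrow> 'i \<Rightarrow> 'o" where
  "Dx y z = lc (I \<times> I) y (\<lambda>p. M (\<delta> (bvec (fst p))) (g (M z (bvec (snd p)))))"

lemma linV_Dx: "linV I (Dx y)"
  unfolding Dx_def lc_def
  by (intro linV_vsum linV_vsmult linV_comp[OF linV_M_right linV_comp[OF hom_lin[OF g] linV_M_left]])

lemma Dx_vec[simp]: "Dx y z \<in> vec I"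
  by (simp add: Dx_def lc_vec)

lemma Dx_tensor:
  assumes a: "a \<in> vec I" and b: "b \<in> vec I"
  shows "Dx (tensor a b) z = M (\<delta> a) (g (M z b))"
proof -
  have "Dx (tensor a b) z = vsum I (\<lambda>i. vsum I (\<lambda>j. vsmult (a i * b j) (M (\<delta> (bvec i)) (g (M z (bvec j))))))"
    by (simp add: Dx_def lc_tensor)
  also have "\<dots> = M (\<delta> a) (g (M z b))"
    apply (rule bilin_decomp[where \<Phi>="\<lambda>x y. M (\<delta> x) (g (M z y))", OF fin a b])
     apply (rule linV_comp[OF linV_M_left dl])
    apply (rule linV_comp[OF linV_M_right linV_comp[OF hom_lin[OF g] linV_M_right]])
    done
  finally show ?thesis .
qed

lemma Dcore:
  assumes z: "z \<in> vec I"
  shows "Dx (mu x y) z = vadd (act I c f g x (Dx y z)) (Dx x (act I c (\<lambda>w. w) (\<lambda>w. w) y z))"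
proof -
  let ?b = "bvec :: 'i \<Rightarrow> 'i \<Rightarrow> 'o"
  have L: "Dx (mu x y) z = vsum (I \<times> I) (\<lambda>p. vsum (I \<times> I) (\<lambda>q. vsmult (x p * y q)
     (M (\<delta> (M (?b (fst p)) (?b (fst q)))) (g (M z (M (?b (snd q)) (?b (snd p))))))))"
    unfolding Dx_def[of "mu x y"] lc_mult
    by (rule vsum_cong, rule vsum_cong) (auto simp: Dx_tensor[unfolded Dx_def])
  have R1: "act I c f g x (Dx y z) = vsum (I \<times> I) (\<lambda>p. vsum (I \<times> I) (\<lambda>q. vsmult (x p * y q)
     (M (M (f (?b (fst p))) (M (\<delta> (?b (fst q))) (g (M z (?b (snd q)))))) (g (?b (snd p))))))"
    by (simp add: act_def Dx_def lc_def sc_mult_vsum_left sc_mult_vsum_right sc_mult_vsmult_left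
        sc_mult_vsmult_right vsmult_vsum)
  have R2: "Dx x (act I c (\<lambda>w. w) (\<lambda>w. w) y z) = vsum (I \<times> I) (\<lambda>p. vsum (I \<times> I) (\<lambda>q. vsmult (x p * y q)
     (M (\<delta> (?b (fst p))) (g (M (M (M (?b (fst q)) z) (?b (snd q))) (?b (snd p)))))))"
    unfolding Dx_def[of x] lc_def act_def
  proof (rule vsum_cong)
    fix p assume p: "p \<in> I \<times> I"
    have "g (M (vsum (I \<times> I) (\<lambda>q. vsmult (y q) (M (M (?b (fst q)) z) (?b (snd q))))) (?b (snd p))) =
          g (vsum (I \<times> I) (\<lambda>q. vsmult (y q) (M (M (M (?b (fst q)) z) (?b (snd q))) (?b (snd p)))))"
      by (simp add: sc_mult_vsum_left sc_mult_vsmult_left)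
    also have "\<dots> = vsum (I \<times> I) (\<lambda>q. vsmult (y q) (g (M (M (M (?b (fst q)) z) (?b (snd q))) (?b (snd p)))))"
      by (rule linV_sum[OF hom_lin[OF g]]) simp_all
    finally have e: "g (M (vsum (I \<times> I) (\<lambda>q. vsmult (y q) (M (M (?b (fst q)) z) (?b (snd q))))) (?b (snd p))) =
       vsum (I \<times> I) (\<lambda>q. vsmult (y q) (g (M (M (M (?b (fst q)) z) (?b (snd q))) (?b (snd p)))))" .
    show "vsmult (x p) (M (\<delta> (?b (fst p))) (g (M (vsum (I \<times> I) (\<lambda>q. vsmult (y q) (M (M (?b (fst q)) z) (?b (snd q))))) (?b (snd p))))) =
      vsum (I \<times> I) (\<lambda>q. vsmult (x p * y q) (M (\<delta> (?b (fst p))) (g (M (M (M (?b (fst q)) z) (?b (snd q))) (?b (snd p))))))"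
      unfolding e by (simp add: sc_mult_vsum_right sc_mult_vsmult_right vsmult_vsum)
  qed
  have T: "M (\<delta> (M (?b (fst p)) (?b (fst q)))) (g (M z (M (?b (snd q)) (?b (snd p))))) =
     vadd (M (M (f (?b (fst p))) (M (\<delta> (?b (fst q))) (g (M z (?b (snd q)))))) (g (?b (snd p))))
          (M (\<delta> (?b (fst p))) (g (M (M (M (?b (fst q)) z) (?b (snd q))) (?b (snd p)))))"
    if "p \<in> I \<times> I" "q \<in> I \<times> I" for p q
    using that z by (auto simp: dder sc_mult_vadd_left hom_mult[OF g])
  show ?thesis
    unfolding L R1 R2 vsum_vadd[symmetric] vsmult_vadd[symmetric]
    by (rule vsum_cong, rule vsum_cong) (simp add: T)
qed

definition Dm where "Dm y = mat I (Dx y)"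

lemma Dm_derivation: "is_derivation (I \<times> I) (env_C c) (env_u u) (Tm f g) Dm"
proof -
  have 1: "Dm (vadd x y) = vadd (Dm x) (Dm y)" for x y
  proof -
    have "Dx (vadd x y) = (\<lambda>z. vadd (Dx x z) (Dx y z))" by (rule ext) (simp add: Dx_def lc_vadd)
    then show ?thesis by (simp add: Dm_def mat_vadd)
  qed
  have 2: "Dm (vsmult a x) = mat I (\<lambda>z. act I c f g (vsmult a (env_u u)) (app I (Dm x) z))" for a x
  proof -
    have "Dx (vsmult a x) = (\<lambda>z. vsmult a (Dx x z))" by (rule ext) (simp add: Dx_def lc_vsmult)
    then have "Dm (vsmult a x) = mat I (\<lambda>z. vsmult a (Dx x z))"
      by (simp add: Dm_def)
    also have "\<dots> = mat I (\<lambda>z. act I c f g (vsmult a (env_u u)) (app I (Dm x) z))"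
      by (rule mat_cong) (simp add: Dm_def app_mat linV_Dx act_smult_unit f g)
    finally show ?thesis .
  qed
  have 3: "Dm (mu x y) = vadd (mat I (\<lambda>z. act I c f g x (app I (Dm y) z)))
      (mat I (\<lambda>z. app I (Dm x) (act I c (\<lambda>w. w) (\<lambda>w. w) y z)))" for x y
  proof -
    have "Dm (mu x y) = mat I (\<lambda>z. vadd (act I c f g x (app I (Dm y) z)) (app I (Dm x) (act I c (\<lambda>w. w) (\<lambda>w. w) y z)))"
      unfolding Dm_def by (rule mat_cong) (simp add: Dcore app_mat linV_Dx)
    then show ?thesis by (simp add: mat_vadd)
  qed
  show ?thesis
    unfolding is_derivation_def Tm_def bimod.simps
    using 1 2 3 by (simp add: Dm_def)
qed

lemma vsmult_zero: "vsmult a (\<lambda>_. 0) = (\<lambda>_. (0::'o))" by (simp add: vsmult_def)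

lemma delta_u: "\<delta> u = (\<lambda>_. 0)"
proof -
  have "\<delta> u = \<delta> (M u u)" by simp
  also have "\<dots> = vadd (\<delta> u) (\<delta> u)" using dder[of u u] f g by simp
  finally have e: "\<delta> u = vadd (\<delta> u) (\<delta> u)" .
  show ?thesis
  proof (rule ext)
    fix i
    have "\<delta> u i = \<delta> u i + \<delta> u i" using fun_cong[OF e, of i] by (simp add: vadd_def)
    then show "\<delta> u i = 0" by simp
  qed
qed

lemma extract_inner:
  assumes a0: "a0 \<in> ann_ideal (I \<times> I) (env_C c) (env_u u)"
  shows "\<exists>t\<in>vec I. \<forall>a\<in>vec I. vsmult a0 (\<delta> a) = vsub (M (f a) t) (M t (g a))"
proof -
  have "is_inner_derivation (I \<times> I) (Tm f g) (\<lambda>x. bm_lact (Tm f g) (vsmult a0 (env_u u)) (Dm x))"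
    using a0 Tm_bimodule[OF f g] Dm_derivation unfolding ann_ideal_def by blast
  then obtain P where P: "P \<in> vec (I \<times> I)" and PP: "\<And>y. y \<in> vec (I \<times> I) \<Longrightarrow>
     mat I (\<lambda>z. act I c f g y (app I P z)) =
     vadd (mat I (\<lambda>z. act I c f g (vsmult a0 (env_u u)) (app I (Dm y) z)))
          (mat I (\<lambda>z. app I P (act I c (\<lambda>w. w) (\<lambda>w. w) y z)))"
    unfolding is_inner_derivation_def Tm_def bimod.simps by blast
  define t where "t = app I P u"
  have t: "t \<in> vec I" by (simp add: t_def)
  have hid: "linV I (\<lambda>w. w)" by (rule linV_id)
  have r1: "M (f a) t = vadd (vsmult a0 (\<delta> a)) (app I P a)" if a: "a \<in> vec I" for a
  proof -
    have ta: "tensor a u \<in> vec (I \<times> I)" using a by simp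
    have e1: "mat I (\<lambda>z. act I c f g (tensor a u) (app I P z)) = mat I (\<lambda>z. M (f a) (app I P z))"
      by (rule mat_cong) (simp add: act_tensor hom_lin[OF f] hom_lin[OF g] a g)
    have e2: "mat I (\<lambda>z. act I c f g (vsmult a0 (env_u u)) (app I (Dm (tensor a u)) z)) =
              mat I (\<lambda>z. vsmult a0 (M (\<delta> a) (g z)))"
      by (rule mat_cong) (simp add: Dm_def app_mat linV_Dx act_smult_unit f g Dx_tensor a)
    have e3: "mat I (\<lambda>z. app I P (act I c (\<lambda>w. w) (\<lambda>w. w) (tensor a u) z)) = mat I (\<lambda>z. app I P (M a z))"
      by (rule mat_cong) (simp add: act_tensor hid a)
    have "mat I (\<lambda>z. M (f a) (app I P z)) = mat I (\<lambda>z. vadd (vsmult a0 (M (\<delta> a) (g z))) (app I P (M a z)))"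
      using PP[OF ta] unfolding e1 e2 e3 mat_vadd .
    then have "M (f a) (app I P u) = vadd (vsmult a0 (M (\<delta> a) (g u))) (app I P (M a u))"
      by (rule mat_inj[OF fin linV_comp[OF linV_M_right linV_app]
            linV_vadd[OF linV_vsmult[OF linV_comp[OF linV_M_right hom_lin[OF g]]] linV_comp[OF linV_app linV_M_right]]])
         simp
    then show ?thesis using a by (simp add: t_def g)
  qed
  have r2: "M t (g b) = app I P b" if b: "b \<in> vec I" for b
  proof -
    have tb: "tensor u b \<in> vec (I \<times> I)" using b by simp
    have e1: "mat I (\<lambda>z. act I c f g (tensor u b) (app I P z)) = mat I (\<lambda>z. M (app I P z) (g b))"
      by (rule mat_cong) (simp add: act_tensor hom_lin[OF f] hom_lin[OF g] b f)
    have e2: "mat I (\<lambda>z. act I c f g (vsmult a0 (env_u u)) (app I (Dm (tensor u b)) z)) =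
              mat I (\<lambda>z. (\<lambda>_. 0))"
      by (rule mat_cong) (simp add: Dm_def app_mat linV_Dx act_smult_unit f g Dx_tensor b delta_u vsmult_zero)
    have e3: "mat I (\<lambda>z. app I P (act I c (\<lambda>w. w) (\<lambda>w. w) (tensor u b) z)) = mat I (\<lambda>z. app I P (M z b))"
      by (rule mat_cong) (simp add: act_tensor hid b)
    have "mat I (\<lambda>z. M (app I P z) (g b)) = mat I (\<lambda>z. vadd (\<lambda>_. 0) (app I P (M z b)))"
      using PP[OF tb] unfolding e1 e2 e3 mat_vadd .
    also have "\<dots> = mat I (\<lambda>z. app I P (M z b))" by (simp add: vadd_def)
    finally have "M (app I P u) (g b) = app I P (M u b)"
      by (rule mat_inj[OF fin linV_comp[OF linV_M_left linV_app] linV_comp[OF linV_app linV_M_left]]) simp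
    then show ?thesis using b by (simp add: t_def)
  qed
  show ?thesis
  proof (intro bexI ballI)
    fix a :: "'i \<Rightarrow> 'o" assume a: "a \<in> vec I"
    show "vsmult a0 (\<delta> a) = vsub (M (f a) t) (M t (g a))"
      using r1[OF a] r2[OF a] by (auto simp: vops fun_eq_iff)
  qed (rule t)
qed

end

lemma pow_dvd_all_zero:
  fixes pi y :: "'o::idom"
  assumes dvr: "dvr_uniformizer pi" and h: "\<And>n. pi ^ n dvd y"
  shows "y = 0"
proof (rule ccontr)
  assume y: "y \<noteq> 0"
  from dvr have pi0: "pi \<noteq> 0" and nu: "\<not> pi dvd 1" and fac: "\<And>x. x \<noteq> 0 \<Longrightarrow> \<exists>v n. v dvd 1 \<and> x = v * pi ^ n"
    unfolding dvr_uniformizer_def by auto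
  obtain v n where v: "v dvd 1" and yv: "y = v * pi ^ n" using fac[OF y] by blast
  have "pi ^ n * pi dvd pi ^ n * v" using h[of "Suc n"] yv by (simp add: mult.commute)
  then have "pi dvd v" using pi0 by (simp add: mult_dvd_mono)
  then have "pi dvd 1" using v dvd_trans by blast
  with nu show False by blast
qed

lemma dvd_sc_mult_left: "(\<And>i. (a::'a::comm_ring_1) dvd x i) \<Longrightarrow> a dvd sc_mult J C x y k"
  unfolding sc_mult_def by (auto intro!: dvd_sum dvd_mult2[OF dvd_mult2])
lemma dvd_sc_mult_right: "(\<And>i. (a::'a::comm_ring_1) dvd y i) \<Longrightarrow> a dvd sc_mult J C x y k"
  unfolding sc_mult_def by (auto intro!: dvd_sum dvd_mult2[OF dvd_mult])
lemma dvd_sc_mult_both: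
  assumes h1: "\<And>i. a dvd x i" and h2: "\<And>i. (b::'a::comm_ring_1) dvd y i"
  shows "a * b dvd sc_mult J C x y k"
proof -
  have t: "a * b dvd x i * y j * C i j k" for i j
    by (rule dvd_mult2, rule mult_dvd_mono[OF h1 h2])
  show ?thesis unfolding sc_mult_def by (simp add: dvd_sum t)
qed

lemma sc_mult_flip: "sc_mult I (\<lambda>i j k. c j i k) x y = sc_mult I c y x"
proof (rule ext)
  fix k
  have "(\<Sum>i\<in>I. \<Sum>j\<in>I. x i * y j * c j i k) = (\<Sum>j\<in>I. \<Sum>i\<in>I. x i * y j * c j i k)"
    by (rule sum.swap)
  also have "\<dots> = (\<Sum>j\<in>I. \<Sum>i\<in>I. y j * x i * c j i k)"
    by (rule sum.cong[OF refl], rule sum.cong[OF refl]) (metis mult.commute)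
  finally have eq: "(\<Sum>i\<in>I. \<Sum>j\<in>I. x i * y j * c j i k) = (\<Sum>j\<in>I. \<Sum>i\<in>I. y j * x i * c j i k)" .
  show "sc_mult I (\<lambda>i j k. c j i k) x y k = sc_mult I c y x k" by (simp only: sc_mult_def eq)
qed

lemma sc_algebra_flip: assumes "sc_algebra I c u" shows "sc_algebra I (\<lambda>i j k. c j i k) u"
proof -
  have fin: "finite I" and uV: "u \<in> vec I"
    and A: "\<And>x y z. x \<in> vec I \<Longrightarrow> y \<in> vec I \<Longrightarrow> z \<in> vec I \<Longrightarrow>
        sc_mult I c (sc_mult I c x y) z = sc_mult I c x (sc_mult I c y z)"
    and U: "\<And>x. x \<in> vec I \<Longrightarrow> sc_mult I c u x = x \<and> sc_mult I c x u = x"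
    using assms unfolding sc_algebra_def by auto
  show ?thesis unfolding sc_algebra_def sc_mult_flip[of I c]
  proof (intro conjI ballI fin uV)
    fix x y z :: "'a \<Rightarrow> 'b" assume "x \<in> vec I" "y \<in> vec I" "z \<in> vec I"
    then show "sc_mult I c z (sc_mult I c y x) = sc_mult I c (sc_mult I c z y) x"
      using A by simp
  next
    fix x :: "'a \<Rightarrow> 'b" assume "x \<in> vec I"
    then show "sc_mult I c x u = x" "sc_mult I c u x = x" using U by auto
  qed
qed

lemma inv_right:
  fixes pi :: "'o::idom" and c :: "'i \<Rightarrow> 'i \<Rightarrow> 'i \<Rightarrow> 'o"
  assumes alg: "sc_algebra I c u" and dvr: "dvr_uniformizer pi" and complete: "pi_complete pi"
    and a: "a \<in> vec I" and b: "b \<in> vec I" and ab: "\<And>i. pi dvd (sc_mult I c a b i - u i)"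
  shows "\<exists>X\<in>vec I. sc_mult I c a X = u"
proof -
  interpret scalg I c u by (rule scalg.intro[OF alg])
  define e where "e = vsub u (M a b)"
  have eV: "e \<in> vec I" by (simp add: e_def)
  have edvd: "pi dvd e i" for i using ab[of i] unfolding e_def vsub_def by (metis dvd_minus_iff minus_diff_eq)
  have abe: "M a b = vsub u e" by (simp add: e_def vsub_def)
  define pw where "pw = rec_nat u (\<lambda>_ p. M e p)"
  have pw0: "pw 0 = u" and pwS: "pw (Suc n) = M e (pw n)" for n by (simp_all add: pw_def)
  have pwV: "pw n \<in> vec I" for n by (cases n) (simp_all add: pw0 pwS)
  have pwdvd: "pi ^ n dvd pw n i" for n i
  proof (induction n arbitrary: i)
    case 0 then show ?case by simp
  next
    case (Suc n)
    then show ?case unfolding pwS power_Suc by (intro dvd_sc_mult_both edvd) 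
  qed
  define X where "X n = M b (vsum {..<n} pw)" for n
  have XV: "X n \<in> vec I" for n by (simp add: X_def)
  have XS: "X (Suc n) = vadd (X n) (M b (pw n))" for n
  proof -
    have "vsum {..<Suc n} pw = vadd (vsum {..<n} pw) (pw n)" by (simp add: vsum_def vadd_def)
    then show ?thesis by (simp add: X_def sc_mult_vadd_right)
  qed
  have aX: "M a (X n) = vsub u (pw n)" for n
  proof (induction n)
    case 0
    have "vsum {..<0} pw = (\<lambda>_. 0)" by (simp add: vsum_def)
    then show ?case by (simp add: X_def pw0 vsub_def)
  next
    case (Suc n)
    have "M a (M b (pw n)) = M (vsub u e) (pw n)" using a b pwV by (simp add: abe[symmetric])
    also have "\<dots> = vsub (pw n) (pw (Suc n))" using pwV by (simp add: sc_mult_vsub_left pwS)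
    finally have h: "M a (M b (pw n)) = vsub (pw n) (pw (Suc n))" .
    show ?case unfolding XS sc_mult_vadd_right Suc.IH h by (simp add: vops)
  qed
  have cauchy: "pi ^ n dvd (X (Suc n) i - X n i)" for n i
    by (simp add: XS vadd_def) (intro dvd_sc_mult_right pwdvd)
  have lim: "\<exists>x. \<forall>n. pi ^ n dvd (x - X n i)" for i
  proof -
    show ?thesis
      by (rule complete[unfolded pi_complete_def, rule_format, of "\<lambda>n. X n i", OF cauchy])
  qed
  define Xl where "Xl = (\<lambda>i. if i \<in> I then (SOME x. \<forall>n. pi ^ n dvd (x - X n i)) else 0)"
  have XlV: "Xl \<in> vec I" by (simp add: Xl_def vec_def)
  have Xl: "pi ^ n dvd (Xl i - X n i)" for n i
  proof (cases "i \<in> I")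
    case True
    then show ?thesis using someI_ex[OF lim[of i]] by (simp add: Xl_def)
  next
    case False
    then have "X n i = 0" using XV[of n] by (simp add: vec_def)
    then show ?thesis using False by (simp add: Xl_def)
  qed
  have "sc_mult I c a Xl k - u k = 0" for k
  proof (rule pow_dvd_all_zero[OF dvr])
    fix n
    have "Xl = vadd (vsub Xl (X n)) (X n)" by (simp add: vops)
    then have "M a Xl = vadd (M a (vsub Xl (X n))) (M a (X n))"
      by (metis sc_mult_vadd_right)
    then have "M a Xl k - u k = M a (vsub Xl (X n)) k - pw n k"
      by (simp add: aX vops)
    moreover have "pi ^ n dvd M a (vsub Xl (X n)) k"
      by (intro dvd_sc_mult_right) (simp add: vsub_def Xl)
    ultimately show "pi ^ n dvd M a Xl k - u k" using pwdvd by simp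
  qed
  then show ?thesis using XlV by (auto simp: fun_eq_iff)
qed

lemma vsmult_cancel:
  fixes p :: "'o::idom"
  assumes "p \<noteq> 0" "vsmult p X = vsmult p Y" shows "X = Y"
proof (rule ext)
  fix i show "X i = Y i" using fun_cong[OF assms(2), of i] assms(1) by (simp add: vsmult_def)
qed

theorem lemma3p3:
  fixes pi :: "'o::idom" and I :: "'i set"
    and c :: "'i \<Rightarrow> 'i \<Rightarrow> 'i \<Rightarrow> 'o" and u :: "'i \<Rightarrow> 'o" and d s :: nat
  assumes char0: "CHAR('o) = 0"
    and dvr: "dvr_uniformizer pi"
    and residue_char: "\<exists>p::nat. prime p \<and> pi dvd of_nat p"
    and complete: "pi_complete pi"
    and order: "sc_algebra I c u"
    and separable: "sc_separable I (\<lambda>i j k. Fract (c i j k) 1) (\<lambda>i. Fract (u i) 1)"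
    and depth: "is_depth pi (I \<times> I) (env_C c) (env_u u) d"
    and s_ge: "s \<ge> d + 1"
  shows "out_reduction_injective pi s I c u"
proof -
  interpret scalg I c u by (rule scalg.intro[OF order])
  have pi0: "pi \<noteq> 0" using dvr by (simp add: dvr_uniformizer_def)
  have pis0: "pi ^ s \<noteq> 0" using pi0 by simp
  have pid: "pi ^ d \<in> ann_ideal (I \<times> I) (env_C c) (env_u u)"
    using depth unfolding is_depth_def by (metis (mono_tags, lifting) mem_Collect_eq mult.right_neutral)
  have spow: "pi ^ s = pi ^ (s - d) * pi ^ d" using s_ge by (simp add: power_add[symmetric])
  have pi_dvd_s: "pi dvd pi ^ s" using s_ge by (simp add: dvd_power)
  have pi_dvd_sd: "pi dvd pi ^ (s - d)" using s_ge by (simp add: dvd_power)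
  show ?thesis unfolding out_reduction_injective_def
  proof (intro allI impI)
    fix f g assume fa: "is_alg_aut I c u f" and ga: "is_alg_aut I c u g"
      and so: "same_outer_mod pi s I c u f g"
    have hf: "hom f" and hg: "hom g" using aut_hom fa ga by auto
    obtain w w' where wV: "w \<in> vec I" and w'V: "w' \<in> vec I"
      and ww': "cong_pi pi s (M w w') u" and w'w: "cong_pi pi s (M w' w) u"
      and fx: "\<And>x. x \<in> vec I \<Longrightarrow> cong_pi pi s (f x) (M (M w (g x)) w')"
      using so unfolding same_outer_mod_def by blast
    define e where "e x = vsub (M (f x) w) (M w (g x))" for x
    have eV: "e x \<in> vec I" for x by (simp add: e_def)
    have edvd: "pi ^ s dvd e x i" if x: "x \<in> vec I" for x i
    proof -
      have "e x = vadd (M (vsub (f x) (M (M w (g x)) w')) w) (M (M w (g x)) (vsub (M w' w) u))"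
        using x wV w'V hf hg by (simp add: e_def sc_mult_vsub_left sc_mult_vsub_right) (simp add: vops)
      moreover have "pi ^ s dvd M (vsub (f x) (M (M w (g x)) w')) w i"
        by (rule dvd_sc_mult_left) (use fx[OF x] in \<open>simp add: cong_pi_def vsub_def\<close>)
      moreover have "pi ^ s dvd M (M w (g x)) (vsub (M w' w) u) i"
        by (rule dvd_sc_mult_right) (use w'w in \<open>simp add: cong_pi_def vsub_def\<close>)
      ultimately show ?thesis by (simp add: vadd_def)
    qed
    define \<delta> where "\<delta> x = (\<lambda>i. if i \<in> I then (SOME q. e x i = pi ^ s * q) else 0)" for x
    have dV: "\<delta> x \<in> vec I" for x by (simp add: \<delta>_def vec_def)
    have de: "vsmult (pi ^ s) (\<delta> x) = e x" if x: "x \<in> vec I" for x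
    proof (rule ext)
      fix i
      show "vsmult (pi ^ s) (\<delta> x) i = e x i"
      proof (cases "i \<in> I")
        case True
        have "\<exists>q. e x i = pi ^ s * q" using edvd[OF x, of i] by (auto simp: dvd_def)
        from someI_ex[OF this] show ?thesis using True by (simp add: \<delta>_def vsmult_def)
      next
        case False
        then show ?thesis using eV[of x] by (simp add: \<delta>_def vsmult_def vec_def)
      qed
    qed
    have eadd: "e (vadd x y) = vadd (e x) (e y)" if "x \<in> vec I" "y \<in> vec I" for x y
      using that by (simp add: e_def linV_add[OF hom_lin[OF hf]] linV_add[OF hom_lin[OF hg]]
          sc_mult_vadd_left sc_mult_vadd_right) (simp add: vops algebra_simps)
    have esm: "e (vsmult a x) = vsmult a (e x)" if "x \<in> vec I" for x a
      using that by (simp add: e_def linV_smult[OF hom_lin[OF hf]] linV_smult[OF hom_lin[OF hg]]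
          sc_mult_vsmult_left sc_mult_vsmult_right) (simp add: vops algebra_simps)
    have emul: "e (M a b) = vadd (M (f a) (e b)) (M (e a) (g b))" if "a \<in> vec I" "b \<in> vec I" for a b
      using that wV hf hg by (simp add: e_def hom_mult sc_mult_vsub_left sc_mult_vsub_right) (simp add: vops algebra_simps)
    have dlin: "linV I \<delta>"
      unfolding linV_def
    proof (intro conjI ballI allI dV)
      fix x y :: "'i \<Rightarrow> 'o" assume x: "x \<in> vec I" and y: "y \<in> vec I"
      show "\<delta> (vadd x y) = vadd (\<delta> x) (\<delta> y)"
        by (rule vsmult_cancel[OF pis0]) (simp add: de x y eadd vsmult_vadd)
    next
      fix a :: 'o and x :: "'i \<Rightarrow> 'o" assume x: "x \<in> vec I"
      show "\<delta> (vsmult a x) = vsmult a (\<delta> x)"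
      proof (rule vsmult_cancel[OF pis0])
        have "vsmult (pi ^ s) (\<delta> (vsmult a x)) = vsmult a (vsmult (pi ^ s) (\<delta> x))"
          by (simp only: de[OF vsmult_vec[OF x]] esm[OF x] de[OF x])
        also have "\<dots> = vsmult (pi ^ s) (vsmult a (\<delta> x))" by (simp add: mult.commute)
        finally show "vsmult (pi ^ s) (\<delta> (vsmult a x)) = vsmult (pi ^ s) (vsmult a (\<delta> x))" .
      qed
    qed
    have dder: "\<delta> (M a b) = vadd (M (f a) (\<delta> b)) (M (\<delta> a) (g b))" if a: "a \<in> vec I" and b: "b \<in> vec I" for a b
    proof (rule vsmult_cancel[OF pis0])
      have "vsmult (pi ^ s) (vadd (M (f a) (\<delta> b)) (M (\<delta> a) (g b))) =
            vadd (M (f a) (vsmult (pi ^ s) (\<delta> b))) (M (vsmult (pi ^ s) (\<delta> a)) (g b))"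
        by (simp add: vsmult_vadd sc_mult_vsmult_left sc_mult_vsmult_right)
      also have "\<dots> = e (M a b)" by (simp add: de a b emul)
      finally show "vsmult (pi ^ s) (\<delta> (M a b)) = vsmult (pi ^ s) (vadd (M (f a) (\<delta> b)) (M (\<delta> a) (g b)))"
        by (simp add: de a b)
    qed
    interpret twist I c u f g \<delta>
      by (rule twist.intro[OF scalg.intro[OF order]], unfold_locales) (auto simp: hf hg dlin dder)
    obtain t where tV: "t \<in> vec I" and tt: "\<And>a. a \<in> vec I \<Longrightarrow> vsmult (pi ^ d) (\<delta> a) = vsub (M (f a) t) (M t (g a))"
      using extract_inner[OF pid] by blast
    define W where "W = vsub w (vsmult (pi ^ (s - d)) t)"
    have WV: "W \<in> vec I" using wV tV by (simp add: W_def)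
    have inter: "M (f x) W = M W (g x)" if x: "x \<in> vec I" for x
    proof (rule ext)
      fix i
      have h1: "pi ^ s * \<delta> x i = M (f x) w i - M w (g x) i"
        using fun_cong[OF de[OF x], of i] by (simp add: vsmult_def e_def vsub_def)
      have h2: "pi ^ d * \<delta> x i = M (f x) t i - M t (g x) i"
        using fun_cong[OF tt[OF x], of i] by (simp add: vsmult_def vsub_def)
      have "M (f x) w i - M w (g x) i = pi ^ (s - d) * (M (f x) t i - M t (g x) i)"
        unfolding h1[symmetric] h2[symmetric] spow by (simp add: mult.assoc)
      then show "M (f x) W i = M W (g x) i"
        unfolding W_def sc_mult_vsub_left sc_mult_vsub_right sc_mult_vsmult_left sc_mult_vsmult_right
        by (simp add: vops algebra_simps)
    qed
    have inv1: "pi dvd (M W w' i - u i)" for i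
    proof -
      have eq: "M W w' i - u i = (M w w' i - u i) - pi ^ (s - d) * M t w' i"
        unfolding W_def sc_mult_vsub_left sc_mult_vsmult_left by (simp add: vops)
      have A: "pi dvd M w w' i - u i" using ww' pi_dvd_s dvd_trans by (auto simp: cong_pi_def)
      have B: "pi dvd pi ^ (s - d) * M t w' i" using pi_dvd_sd by (rule dvd_mult2)
      show ?thesis unfolding eq by (rule dvd_diff[OF A B])
    qed
    have inv2: "pi dvd (M w' W i - u i)" for i
    proof -
      have eq: "M w' W i - u i = (M w' w i - u i) - pi ^ (s - d) * M w' t i"
        unfolding W_def sc_mult_vsub_right sc_mult_vsmult_right by (simp add: vops)
      have A: "pi dvd M w' w i - u i" using w'w pi_dvd_s dvd_trans by (auto simp: cong_pi_def)
      have B: "pi dvd pi ^ (s - d) * M w' t i" using pi_dvd_sd by (rule dvd_mult2)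
      show ?thesis unfolding eq by (rule dvd_diff[OF A B])
    qed
    obtain X where XV: "X \<in> vec I" and WX: "M W X = u"
      using inv_right[OF order dvr complete WV w'V inv1] by blast
    obtain Y where YV: "Y \<in> vec I" and YW': "sc_mult I (\<lambda>i j k. c j i k) W Y = u"
      using inv_right[OF sc_algebra_flip[OF order] dvr complete WV w'V] inv2
      unfolding sc_mult_flip[of I c] by blast
    have YW: "M Y W = u" using YW' unfolding sc_mult_flip[of I c] .
    have XY: "Y = X"
    proof -
      have "Y = M Y (M W X)" using YV by (simp add: WX)
      also have "\<dots> = M (M Y W) X" using YV WV XV by simp
      also have "\<dots> = X" using XV by (simp add: YW)
      finally show ?thesis .
    qed
    show "same_outer I c u f g"
      unfolding same_outer_def
    proof (intro bexI conjI ballI)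
      show "M W X = u" by (rule WX)
      show "M X W = u" using YW XY by simp
      fix x :: "'i \<Rightarrow> 'o" assume x: "x \<in> vec I"
      have "f x = M (f x) (M W X)" using x hf by (simp add: WX)
      also have "\<dots> = M (M (f x) W) X" using x hf WV XV by simp
      also have "\<dots> = M (M W (g x)) X" by (simp add: inter x)
      finally show "f x = M (M W (g x)) X" .
    qed (use WV XV in auto)
  qed
qed

end
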